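(* Let $X$ be a separable metrizable space. Then: (1) $USC_p(X)$ is sequentially separable; (2) $B_1(X)$ is sequentially separable; (3) there exists a countable subset $S$ of $C(X)$ such that $[S]_{seq} = B_1(X)$.
   Context: $USC_p(X)$ is the set of all real-valued upper semicontinuous functions on $X$ (functions $f$ with $f^{-1}((-\infty,r))$ open for all $r\in\mathbb{R}$) with the topology of pointwise convergence. For a topological space $Z$ and $A\subseteq Z$, $[A]_{seq}$ denotes the set of all limits of sequences from $A$; $Z$ is sequentially separable if it has a countable $D$ with $[D]_{seq}=Z$. $C(X)$ is the set of continuous real-valued functions on $X$; $B_1(X)$ is the set of pointwise limits of sequences of continuous real-valued functions on $X$, with the pointwise convergence topology (sequential closure in (3) taken in $\mathbb{R}^X$ with the pointwise topology). *)

theory Defs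
  imports "HOL-Analysis.Analysis"
begin

definition pointwise_top :: "'a topology \<Rightarrow> ('a \<Rightarrow> real) topology" where
  "pointwise_top X = product_topology (\<lambda>_. euclideanreal) (topspace X)"

definition seq_closure :: "'b topology \<Rightarrow> 'b set \<Rightarrow> 'b set" where
  "seq_closure Z A = {z. \<exists>\<sigma>. range \<sigma> \<subseteq> A \<and> limitin Z \<sigma> z sequentially}"

definition sequentially_separable :: "'b topology \<Rightarrow> bool" where
  "sequentially_separable Z \<longleftrightarrow>
     (\<exists>D. countable D \<and> D \<subseteq> topspace Z \<and> seq_closure Z D = topspace Z)"

definition USC :: "'a topology \<Rightarrow> ('a \<Rightarrow> real) set" where
  "USC X = {f \<in> topspace X \<rightarrow>\<^sub>E UNIV.
              \<forall>r. openin X {x \<in> topspace X. f x < r}}"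

definition USC_p :: "'a topology \<Rightarrow> ('a \<Rightarrow> real) topology" where
  "USC_p X = subtopology (pointwise_top X) (USC X)"

definition Cfun :: "'a topology \<Rightarrow> ('a \<Rightarrow> real) set" where
  "Cfun X = {f \<in> topspace X \<rightarrow>\<^sub>E UNIV. continuous_map X euclideanreal f}"

definition B1 :: "'a topology \<Rightarrow> ('a \<Rightarrow> real) set" where
  "B1 X = seq_closure (pointwise_top X) (Cfun X)"

definition B1_p :: "'a topology \<Rightarrow> ('a \<Rightarrow> real) topology" where
  "B1_p X = subtopology (pointwise_top X) (B1 X)"

end

theory Submission imports Defs "HOL-Library.Countable"
begin


definition smin :: "real \<Rightarrow> ('w \<Rightarrow> real) \<Rightarrow> 'w list \<Rightarrow> real" where
  "smin c g W = foldr (\<lambda>w acc. min (g w) acc) W c"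

lemma smin_le_c: "smin c g W \<le> c"
  by (induction W) (auto simp: smin_def)

lemma smin_le: "w \<in> set W \<Longrightarrow> smin c g W \<le> g w"
  by (induction W) (auto simp: smin_def)

lemma smin_ge: "v \<le> c \<Longrightarrow> (\<And>w. w \<in> set W \<Longrightarrow> v \<le> g w) \<Longrightarrow> v \<le> smin c g W"
  by (induction W) (auto simp: smin_def)

lemma smin_cont:
  assumes "\<And>w. continuous_map X euclideanreal (g w)"
  shows "continuous_map X euclideanreal (\<lambda>x. smin c (\<lambda>w. g w x) W)"
proof (induction W)
  case Nil then show ?case by (simp add: smin_def)
next
  case (Cons a W)
  have "continuous_map X euclideanreal (\<lambda>x. min (g a x) (smin c (\<lambda>w. g w x) W))"
    by (intro continuous_map_real_min assms Cons)
  then show ?case by (simp add: smin_def)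
qed

locale SepMet = Metric_space M d for M :: "'a set" and d +
  fixes pD :: "nat \<Rightarrow> 'a"
  assumes pD_in: "M \<noteq> {} \<Longrightarrow> pD k \<in> M"
    and pD_dense: "x \<in> M \<Longrightarrow> \<epsilon> > 0 \<Longrightarrow> \<exists>k. d x (pD k) < \<epsilon>"
  fixes r :: "nat \<Rightarrow> real"
  assumes r_dense: "a < b \<Longrightarrow> \<exists>j. a < r j \<and> r j < b"
begin

definition e :: "nat \<Rightarrow> 'a \<Rightarrow> real" where "e n x = min 1 (d x (pD n))"

definition rho :: "nat \<Rightarrow> 'a \<Rightarrow> 'a \<Rightarrow> real" where
  "rho N x y = (\<Sum>n<N. \<bar>e n x - e n y\<bar>)"

lemma rho_nonneg: "0 \<le> rho N x y"
  by (simp add: rho_def sum_nonneg)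

lemma rho_sym: "rho N x y = rho N y x"
  by (simp add: rho_def abs_minus_commute)

lemma rho_tri: "rho N x z \<le> rho N x y + rho N y z"
  unfolding rho_def sum.distrib[symmetric] by (rule sum_mono) linarith

lemma rho_mono: "N \<le> N' \<Longrightarrow> rho N x y \<le> rho N' x y"
  unfolding rho_def by (rule sum_mono2) auto

lemma e_lip: assumes "x \<in> M" "y \<in> M" shows "\<bar>e n x - e n y\<bar> \<le> d x y"
proof -
  have p: "pD n \<in> M" using assms pD_in by blast
  have "\<bar>d x (pD n) - d y (pD n)\<bar> \<le> d x y"
    using triangle[OF assms(1,2) p] triangle[OF assms(2,1) p] commute[of x y] by linarith
  then show ?thesis unfolding e_def by linarith
qed

lemma rho_le: assumes "x \<in> M" "y \<in> M" shows "rho N x y \<le> N * d x y"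
proof -
  have "rho N x y \<le> (\<Sum>n<N. d x y)" unfolding rho_def by (rule sum_mono) (rule e_lip[OF assms])
  then show ?thesis by simp
qed

lemma rho_pos:
  assumes x: "x \<in> M" and E: "closedin mtopology E" and xE: "x \<notin> E"
  shows "\<exists>N \<delta>. \<delta> > 0 \<and> (\<forall>y\<in>E. \<delta> \<le> rho N x y)"
proof -
  have "openin mtopology (M - E)" using E by (simp add: openin_diff)
  then obtain r where r: "r > 0" "mball x r \<subseteq> M - E"
    using x xE by (metis DiffI openin_mtopology)
  define r' where "r' = min r 1"
  have r': "r' > 0" "r' \<le> 1" "mball x r' \<subseteq> M - E" using r by (auto simp: r'_def)
  obtain k where k: "d x (pD k) < r'/3" using pD_dense[OF x, of "r'/3"] r' by auto
  have p: "pD k \<in> M" using x pD_in by blast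
  show ?thesis
  proof (intro exI conjI ballI)
    show "r'/3 > 0" using r' by simp
    fix y assume y: "y \<in> E"
    have yM: "y \<in> M" using E y closedin_subset by fastforce
    have "d x y \<ge> r'" using r'(3) y yM x by (auto simp: subset_iff not_less)
    then have "d y (pD k) \<ge> 2*r'/3" using triangle[OF x p yM] k commute[of "pD k" y] by linarith
    then have "e k y - e k x \<ge> r'/3" using k r' nonneg[of x "pD k"] unfolding e_def by linarith
    then have "r'/3 \<le> \<bar>e k x - e k y\<bar>" by linarith
    also have "\<dots> \<le> rho (Suc k) x y" unfolding rho_def
      by (rule member_le_sum) auto
    finally show "r'/3 \<le> rho (Suc k) x y" .
  qed
qed

lemma e_01: assumes "x \<in> M" shows "0 \<le> e n x \<and> e n x \<le> 1"
proof -
  have "pD n \<in> M" using pD_in assms by blast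
  then show ?thesis using nonneg[of x "pD n"] by (simp add: e_def)
qed

lemma floor_close: "\<lfloor>u::real\<rfloor> = \<lfloor>v\<rfloor> \<Longrightarrow> \<bar>u - v\<bar> < 1"
proof -
  assume a: "\<lfloor>u\<rfloor> = \<lfloor>v\<rfloor>"
  have "of_int \<lfloor>u\<rfloor> \<le> u" "u < of_int \<lfloor>u\<rfloor> + 1" "of_int \<lfloor>v\<rfloor> \<le> v" "v < of_int \<lfloor>v\<rfloor> + 1"
    by linarith+
  then show ?thesis using a by linarith
qed

lemma rho_net:
  assumes eta: "\<eta> > 0"
  shows "\<exists>K. finite K \<and> (\<forall>x\<in>M. \<exists>k\<in>K. rho N x (pD k) < \<eta>)"
proof -
  obtain G0 :: nat where G0: "real G0 > 2 * N / \<eta>" using reals_Archimedean2 by blast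
  define G where "G = Suc G0"
  have G: "real G > 2 * N / \<eta>" "G > 0" using G0 by (auto simp: G_def)
  define cell where "cell x = map (\<lambda>n. nat \<lfloor>real G * e n x\<rfloor>) [0..<N]" for x
  define C where "C = cell ` M"
  have Csub: "C \<subseteq> {xs. set xs \<subseteq> {..G} \<and> length xs = N}"
  proof
    fix c assume "c \<in> C"
    then obtain x where x: "x \<in> M" "c = cell x" by (auto simp: C_def)
    have "nat \<lfloor>real G * e n x\<rfloor> \<le> G" for n
    proof -
      have "real G * e n x \<le> real G" using e_01[OF x(1)] by (simp add: mult_left_le)
      then have "\<lfloor>real G * e n x\<rfloor> \<le> int G" by (simp add: floor_le_iff)
      then show ?thesis by simp
    qed
    then show "c \<in> {xs. set xs \<subseteq> {..G} \<and> length xs = N}" using x by (auto simp: cell_def)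
  qed
  have finC: "finite C"
    by (rule finite_subset[OF Csub]) (rule finite_lists_length_eq, simp)
  define rep where "rep c = (SOME x. x \<in> M \<and> cell x = c)" for c
  have rep: "rep c \<in> M \<and> cell (rep c) = c" if "c \<in> C" for c
  proof -
    have "\<exists>x. x \<in> M \<and> cell x = c" using that C_def by auto
    then show ?thesis unfolding rep_def by (rule someI_ex)
  qed
  define \<epsilon> where "\<epsilon> = \<eta> / (2 * (N + 1))"
  have \<epsilon>: "\<epsilon> > 0" using eta by (simp add: \<epsilon>_def)
  define kk where "kk c = (SOME k. d (rep c) (pD k) < \<epsilon>)" for c
  have kk: "d (rep c) (pD (kk c)) < \<epsilon>" if "c \<in> C" for c
    unfolding kk_def using pD_dense[OF conjunct1[OF rep[OF that]] \<epsilon>] by (rule someI_ex)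
  show ?thesis
  proof (intro exI conjI ballI)
    show "finite (kk ` C)" using finC by simp
    fix x assume x: "x \<in> M"
    let ?c = "cell x"
    have cC: "?c \<in> C" using x by (simp add: C_def)
    have rM: "rep ?c \<in> M" and rc: "cell (rep ?c) = ?c" using rep[OF cC] by auto
    have pM: "pD (kk ?c) \<in> M" using pD_in x by blast
    have 1: "rho N (rep ?c) (pD (kk ?c)) < \<eta>/2"
    proof -
      have "rho N (rep ?c) (pD (kk ?c)) \<le> N * d (rep ?c) (pD (kk ?c))" by (rule rho_le[OF rM pM])
      also have "\<dots> \<le> N * \<epsilon>" using kk[OF cC] by (simp add: mult_left_mono)
      also have "\<dots> < \<eta>/2" using eta unfolding \<epsilon>_def by (simp add: field_simps)
      finally show ?thesis .
    qed
    have 2: "rho N x (rep ?c) \<le> \<eta>/2"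
    proof -
      have trm: "\<bar>e n x - e n (rep ?c)\<bar> \<le> 1 / real G" if n: "n < N" for n
      proof -
        have "nat \<lfloor>real G * e n x\<rfloor> = nat \<lfloor>real G * e n (rep ?c)\<rfloor>"
          using arg_cong[OF rc, of "\<lambda>l. l ! n"] n by (simp add: cell_def)
        moreover have "\<lfloor>real G * e n x\<rfloor> \<ge> 0" "\<lfloor>real G * e n (rep ?c)\<rfloor> \<ge> 0"
          using e_01[OF x] e_01[OF rM] by simp_all
        ultimately have "\<lfloor>real G * e n x\<rfloor> = \<lfloor>real G * e n (rep ?c)\<rfloor>" by (metis nat_eq_iff2)
        then have "\<bar>real G * e n x - real G * e n (rep ?c)\<bar> < 1" by (rule floor_close)
        then have "real G * \<bar>e n x - e n (rep ?c)\<bar> < 1" by (simp add: abs_mult right_diff_distrib[symmetric])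
        then show ?thesis using G(2) by (simp add: field_simps)
      qed
      have "rho N x (rep ?c) \<le> (\<Sum>n<N. 1 / real G)" unfolding rho_def by (rule sum_mono) (use trm in auto)
      also have "\<dots> = N / real G" by simp
      also have "\<dots> \<le> \<eta>/2" using G eta by (simp add: field_simps)
      finally show ?thesis .
    qed
    show "\<exists>k\<in>kk ` C. rho N x (pD k) < \<eta>"
    proof (rule bexI[of _ "kk ?c"])
      show "rho N x (pD (kk ?c)) < \<eta>" using rho_tri[where N=N and x=x and y="rep ?c" and z="pD (kk ?c)"] 1 2 by linarith
    qed (use cC in blast)
  qed
qed

lemma lip_cont:
  assumes "\<And>x y. x \<in> M \<Longrightarrow> y \<in> M \<Longrightarrow> \<bar>f x - f y\<bar> \<le> C * d x y" and C: "C \<ge> 0"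
  shows "continuous_map mtopology euclideanreal f"
proof -
  have "continuous_map mtopology Met_TC.mtopology f"
    unfolding metric_continuous_map[OF Met_TC.Metric_space_axioms]
  proof (intro conjI ballI allI impI)
    show "f ` M \<subseteq> UNIV" by simp
    fix a and \<epsilon>::real assume a: "a \<in> M" and \<epsilon>: "\<epsilon> > 0"
    show "\<exists>\<delta>>0. \<forall>x. x \<in> M \<and> d a x < \<delta> \<longrightarrow> dist (f a) (f x) < \<epsilon>"
    proof (intro exI conjI allI impI)
      show "\<epsilon>/(C+1) > 0" using \<epsilon> C by simp
      fix x assume x: "x \<in> M \<and> d a x < \<epsilon>/(C+1)"
      have "dist (f a) (f x) \<le> C * d a x" using assms(1)[OF a conjunct1[OF x]] by (simp add: dist_real_def)
      also have "\<dots> \<le> C * (\<epsilon>/(C+1))" using x C by (intro mult_left_mono) auto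
      also have "\<dots> < \<epsilon>" using C \<epsilon> by (simp add: field_simps)
      finally show "dist (f a) (f x) < \<epsilon>" .
    qed
  qed
  then show ?thesis by simp
qed

lemma rho_cont: "continuous_map mtopology euclideanreal (\<lambda>x. rho N x (pD k))"
proof (rule lip_cont[where C="real N"])
  fix x y assume x: "x \<in> M" and y: "y \<in> M"
  have "rho N x (pD k) \<le> rho N x y + rho N y (pD k)" by (rule rho_tri)
  moreover have "rho N y (pD k) \<le> rho N y x + rho N x (pD k)" by (rule rho_tri)
  ultimately have "\<bar>rho N x (pD k) - rho N y (pD k)\<bar> \<le> rho N x y" using rho_sym[of N x y] by linarith
  then show "\<bar>rho N x (pD k) - rho N y (pD k)\<bar> \<le> real N * d x y" using rho_le[OF x y, of N] by linarith
qed simp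

definition sfun :: "nat \<Rightarrow> nat \<Rightarrow> nat \<Rightarrow> (nat \<times> nat) list \<Rightarrow> 'a \<Rightarrow> real" where
  "sfun N L c W x = smin (real c) (\<lambda>w. r (fst w) + real L * rho N x (pD (snd w))) W"

lemma sfun_cont: "continuous_map mtopology euclideanreal (sfun N L c W)"
proof -
  have "continuous_map mtopology euclideanreal (\<lambda>x. smin (real c) (\<lambda>w. (\<lambda>w x. r (fst w) + real L * rho N x (pD (snd w))) w x) W)"
    by (rule smin_cont) (intro continuous_map_add continuous_map_real_mult_left rho_cont, simp)
  then show ?thesis unfolding sfun_def[abs_def] by simp
qed

lemma core:
  fixes f :: "'a \<Rightarrow> real"
  assumes fU: "\<And>j. fsigma_in mtopology {x\<in>M. r j < f x}"
    and fL: "\<And>j. fsigma_in mtopology {x\<in>M. f x < r j}"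
  shows "\<exists>\<sigma>. (\<forall>m. \<exists>N L c W. \<sigma> m = sfun N L c W) \<and> (\<forall>x\<in>M. (\<lambda>m. \<sigma> m x) \<longlonglongrightarrow> f x)"
proof -
  have "\<forall>j. \<exists>C::nat \<Rightarrow> 'a set. (\<forall>n. closedin mtopology (C n)) \<and> \<Union> (range C) = {x\<in>M. r j < f x}"
    using fU unfolding fsigma_in_ascending by metis
  then obtain FU :: "nat \<Rightarrow> nat \<Rightarrow> 'a set" where FUc: "\<And>j n. closedin mtopology (FU j n)" and FUu: "\<And>j. \<Union> (range (FU j)) = {x\<in>M. r j < f x}"
    by metis
  have "\<forall>j. \<exists>C::nat \<Rightarrow> 'a set. (\<forall>n. closedin mtopology (C n)) \<and> \<Union> (range C) = {x\<in>M. f x < r j}"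
    using fL unfolding fsigma_in_ascending by metis
  then obtain FL :: "nat \<Rightarrow> nat \<Rightarrow> 'a set" where FLc: "\<And>j n. closedin mtopology (FL j n)" and FLu: "\<And>j. \<Union> (range (FL j)) = {x\<in>M. f x < r j}"
    by metis
  define G where "G j k = \<Union>{FU i l | i l. i \<le> k \<and> l \<le> k \<and> r j \<le> r i}" for j k
  define H where "H j k = \<Union>{FL i l | i l. i \<le> k \<and> l \<le> k \<and> r i \<le> r j}" for j k
  have G_sub: "G j k \<subseteq> {x\<in>M. r j < f x}" for j k
  proof
    fix x assume "x \<in> G j k"
    then obtain i l where il: "r j \<le> r i" "x \<in> FU i l" unfolding G_def by blast
    then have "x \<in> {x\<in>M. r i < f x}" using FUu[of i] by blast
    then show "x \<in> {x\<in>M. r j < f x}" using il(1) by simp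
  qed
  have H_sub: "H j k \<subseteq> {x\<in>M. f x < r j}" for j k
  proof
    fix x assume "x \<in> H j k"
    then obtain i l where il: "r i \<le> r j" "x \<in> FL i l" unfolding H_def by blast
    then have "x \<in> {x\<in>M. f x < r i}" using FLu[of i] by blast
    then show "x \<in> {x\<in>M. f x < r j}" using il(1) by simp
  qed
  have G_mono: "G j k \<subseteq> G j' k'" if "k \<le> k'" "r j' \<le> r j" for j j' k k'
  proof
    fix x assume "x \<in> G j k"
    then obtain i l where il: "i \<le> k" "l \<le> k" "r j \<le> r i" "x \<in> FU i l" unfolding G_def by blast
    have "i \<le> k'" "l \<le> k'" "r j' \<le> r i" using il that by linarith+
    then have "FU i l \<in> {FU i' l' | i' l'. i' \<le> k' \<and> l' \<le> k' \<and> r j' \<le> r i'}" by blast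
    then show "x \<in> G j' k'" unfolding G_def using il by blast
  qed
  have H_mono: "H j k \<subseteq> H j' k'" if "k \<le> k'" "r j \<le> r j'" for j j' k k'
  proof
    fix x assume "x \<in> H j k"
    then obtain i l where il: "i \<le> k" "l \<le> k" "r i \<le> r j" "x \<in> FL i l" unfolding H_def by blast
    have "i \<le> k'" "l \<le> k'" "r i \<le> r j'" using il that by linarith+
    then have "FL i l \<in> {FL i' l' | i' l'. i' \<le> k' \<and> l' \<le> k' \<and> r i' \<le> r j'}" by blast
    then show "x \<in> H j' k'" unfolding H_def using il by blast
  qed
  have G_cov: "\<exists>k. x \<in> G j k" if "x \<in> M" "r j < f x" for x j
  proof -
    have "x \<in> \<Union>(range (FU j))" using FUu[of j] that by simp
    then obtain l where l: "x \<in> FU j l" by blast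
    have "FU j l \<in> {FU i l' | i l'. i \<le> max j l \<and> l' \<le> max j l \<and> r j \<le> r i}" by force
    then have "x \<in> G j (max j l)" unfolding G_def using l by blast
    then show ?thesis by blast
  qed
  have H_cov: "\<exists>k. x \<in> H j k" if "x \<in> M" "f x < r j" for x j
  proof -
    have "x \<in> \<Union>(range (FL j))" using FLu[of j] that by simp
    then obtain l where l: "x \<in> FL j l" by blast
    have "FL j l \<in> {FL i l' | i l'. i \<le> max j l \<and> l' \<le> max j l \<and> r i \<le> r j}" by force
    then have "x \<in> H j (max j l)" unfolding H_def using l by blast
    then show ?thesis by blast
  qed
  have G_closed: "closedin mtopology (G j k)" for j k
  proof -
    have "{FU i l | i l. i \<le> k \<and> l \<le> k \<and> r j \<le> r i} \<subseteq> (\<lambda>(i,l). FU i l) ` ({..k} \<times> {..k})" by auto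
    then have "finite {FU i l | i l. i \<le> k \<and> l \<le> k \<and> r j \<le> r i}" by (rule finite_subset) auto
    then show ?thesis unfolding G_def by (rule closedin_Union) (use FUc in auto)
  qed
  have H_closed: "closedin mtopology (H j k)" for j k
  proof -
    have "{FL i l | i l. i \<le> k \<and> l \<le> k \<and> r i \<le> r j} \<subseteq> (\<lambda>(i,l). FL i l) ` ({..k} \<times> {..k})" by auto
    then have "finite {FL i l | i l. i \<le> k \<and> l \<le> k \<and> r i \<le> r j}" by (rule finite_subset) auto
    then show ?thesis unfolding H_def by (rule closedin_Union) (use FLc in auto)
  qed
  define sep :: "nat \<Rightarrow> real" where "sep m = 1 / (real m + 1)" for m
  define A where "A j m = {x\<in>M. \<exists>n\<le>m. x \<in> G j n \<and> (\<forall>y\<in>H j n. sep m \<le> rho m x y)}" for j m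
  define B where "B j m = {z\<in>M. \<exists>n\<le>m. z \<in> H j n \<and> (\<forall>y\<in>G j n. sep m \<le> rho m z y)}" for j m
  have AB_sep: "sep m \<le> rho m x z" if x: "x \<in> A i m" and z: "z \<in> B j m" and ji: "r j \<le> r i" for x z i j m
  proof -
    obtain n where n: "n \<le> m" "x \<in> G i n" "\<forall>y\<in>H i n. sep m \<le> rho m x y" using x A_def by auto
    obtain n' where n': "n' \<le> m" "z \<in> H j n'" "\<forall>y\<in>G j n'. sep m \<le> rho m z y" using z B_def by auto
    show ?thesis
    proof (cases "n' \<le> n")
      case True
      then have "z \<in> H i n" using H_mono[OF True ji] n' by blast
      then show ?thesis using n by blast
    next
      case False
      then have "x \<in> G j n'" using G_mono[of n n' j i] ji n by auto
      then show ?thesis using n' rho_sym by metis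
    qed
  qed
  have sep_small: "\<exists>m0. \<forall>m\<ge>m0. sep m \<le> \<delta>" if "\<delta> > 0" for \<delta>
  proof -
    obtain m0 :: nat where "1/\<delta> < real m0" using reals_Archimedean2 by blast
    then have "sep m \<le> \<delta>" if "m \<ge> m0" for m
    proof -
      have "1/\<delta> < real m + 1" using that \<open>1/\<delta> < real m0\<close> by linarith
      then show ?thesis unfolding sep_def using \<open>\<delta> > 0\<close> by (simp add: field_simps)
    qed
    then show ?thesis by blast
  qed
  have A_ev: "\<exists>m0. \<forall>m\<ge>m0. x \<in> A i m" if x: "x \<in> M" and fx: "r i < f x" for x i
  proof -
    obtain n0 where n0: "x \<in> G i n0" using G_cov[OF x fx] by blast
    have "x \<notin> H i n0" using H_sub fx by fastforce
    then obtain N \<delta> where \<delta>: "\<delta> > 0" "\<forall>y\<in>H i n0. \<delta> \<le> rho N x y"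
      using rho_pos[OF x H_closed] by blast
    obtain m1 where m1: "\<forall>m\<ge>m1. sep m \<le> \<delta>" using sep_small[OF \<delta>(1)] by blast
    have "x \<in> A i m" if "m \<ge> max n0 (max N m1)" for m
      unfolding A_def
    proof (intro CollectI conjI exI[of _ n0])
      show "x \<in> M" "n0 \<le> m" "x \<in> G i n0" using x n0 that by auto
      show "\<forall>y\<in>H i n0. sep m \<le> rho m x y"
        using \<delta>(2) m1 that rho_mono[of N m x] by (meson max.boundedE order_trans)
    qed
    then show ?thesis by blast
  qed
  have B_ev: "\<exists>m0. \<forall>m\<ge>m0. x \<in> B i m" if x: "x \<in> M" and fx: "f x < r i" for x i
  proof -
    obtain n0 where n0: "x \<in> H i n0" using H_cov[OF x fx] by blast
    have "x \<notin> G i n0" using G_sub fx by fastforce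
    then obtain N \<delta> where \<delta>: "\<delta> > 0" "\<forall>y\<in>G i n0. \<delta> \<le> rho N x y"
      using rho_pos[OF x G_closed] by blast
    obtain m1 where m1: "\<forall>m\<ge>m1. sep m \<le> \<delta>" using sep_small[OF \<delta>(1)] by blast
    have "x \<in> B i m" if "m \<ge> max n0 (max N m1)" for m
      unfolding B_def
    proof (intro CollectI conjI exI[of _ n0])
      show "x \<in> M" "n0 \<le> m" "x \<in> H i n0" using x n0 that by auto
      show "\<forall>y\<in>G i n0. sep m \<le> rho m x y"
        using \<delta>(2) m1 that rho_mono[of N m x] by (meson max.boundedE order_trans)
    qed
    then show ?thesis by blast
  qed
  define C :: "nat \<Rightarrow> real" where "C m = real m + (\<Sum>j<m. \<bar>r j\<bar>)" for m
  define L :: "nat \<Rightarrow> nat" where "L m = nat \<lceil>4 * (real m + 1) * C m\<rceil>" for m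
  define \<eta> :: "nat \<Rightarrow> real" where "\<eta> m = 1 / (2 * (real m + 1) * (real (L m) + 1))" for m
  have \<eta>_pos: "\<eta> m > 0" for m unfolding \<eta>_def by simp
  have C_ge: "\<bar>r j\<bar> \<le> C m" if "j < m" for j m
  proof -
    have "\<bar>r j\<bar> \<le> (\<Sum>j<m. \<bar>r j\<bar>)" by (rule member_le_sum) (use that in auto)
    then show ?thesis unfolding C_def by simp
  qed
  have C_nn: "C m \<ge> 0" for m unfolding C_def by (simp add: sum_nonneg)
  have L_ge: "real (L m) \<ge> 4 * (real m + 1) * C m" for m
    unfolding L_def by (rule real_nat_ceiling_ge)
  have "\<forall>m. \<exists>K. finite K \<and> (\<forall>x\<in>M. \<exists>k\<in>K. rho m x (pD k) < \<eta> m)"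
    using rho_net \<eta>_pos by blast
  then obtain K :: "nat \<Rightarrow> nat set" where K: "\<And>m. finite (K m)" "\<And>m x. x \<in> M \<Longrightarrow> \<exists>k\<in>K m. rho m x (pD k) < \<eta> m"
    by metis
  define WS where "WS m = {(j,k). j < m \<and> k \<in> K m \<and> (\<exists>z\<in>B j m. rho m (pD k) z < \<eta> m)}" for m
  have "finite (WS m)" for m
  proof -
    have "WS m \<subseteq> {..<m} \<times> K m" unfolding WS_def by auto
    then show ?thesis by (rule finite_subset) (simp add: K(1))
  qed
  then have "\<forall>m. \<exists>l. set l = WS m" using finite_list by blast
  then obtain W where W: "\<And>m. set (W m) = WS m" by metis
  define \<sigma> where "\<sigma> m = sfun m (L m) m (W m)" for m
  have \<sigma>S: "\<forall>m. \<exists>N L c W. \<sigma> m = sfun N L c W" unfolding \<sigma>_def by blast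
  have conv: "(\<lambda>m. \<sigma> m x) \<longlonglongrightarrow> f x" if x: "x \<in> M" for x
  proof (rule LIMSEQ_I)
    fix \<epsilon> :: real assume \<epsilon>: "\<epsilon> > 0"
    obtain j1 where j1: "f x - \<epsilon> < r j1" "r j1 < f x" using r_dense[of "f x - \<epsilon>" "f x"] \<epsilon> by auto
    obtain j2 where j2: "f x < r j2" "r j2 < f x + \<epsilon>/2" using r_dense[of "f x" "f x + \<epsilon>/2"] \<epsilon> by auto
    obtain ma where ma: "\<forall>m\<ge>ma. x \<in> A j1 m" using A_ev[OF x j1(2)] by blast
    obtain mb where mb: "\<forall>m\<ge>mb. x \<in> B j2 m" using B_ev[OF x j2(1)] by blast
    obtain mc :: nat where mc: "\<bar>r j1\<bar> < real mc" using reals_Archimedean2 by blast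
    obtain md :: nat where md: "1/\<epsilon> < real md" using reals_Archimedean2 by blast
    show "\<exists>no. \<forall>m\<ge>no. norm (\<sigma> m x - f x) < \<epsilon>"
    proof (intro exI allI impI)
      fix m assume m: "m \<ge> max (max ma mb) (max (max mc md) (max (Suc j1) (Suc j2)))"
      have mA: "x \<in> A j1 m" using ma m by auto
      have mB: "x \<in> B j2 m" using mb m by auto
      have j1m: "j1 < m" and j2m: "j2 < m" using m by auto
      have mcm: "\<bar>r j1\<bar> < real m" using mc m by (meson le_trans max.cobounded1 max.cobounded2 of_nat_le_iff less_le_trans)
      have mdm: "1/\<epsilon> < real m" using md m by (meson le_trans max.cobounded1 max.cobounded2 of_nat_le_iff less_le_trans)
      have sep_pos: "sep m > 0" unfolding sep_def by simp
      have \<eta>_le: "\<eta> m \<le> sep m / 2"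
      proof -
        have "\<eta> m = (sep m / 2) / (real (L m) + 1)" unfolding \<eta>_def sep_def by (simp add: field_simps)
        also have "\<dots> \<le> sep m / 2" using sep_pos by (simp add: divide_le_eq)
        finally show ?thesis .
      qed
      have low: "r j1 \<le> \<sigma> m x"
        unfolding \<sigma>_def sfun_def
      proof (rule smin_ge)
        show "r j1 \<le> real m" using mcm by linarith
        fix w assume w: "w \<in> set (W m)"
        then obtain j k where wjk: "w = (j,k)" "j < m" "k \<in> K m" "\<exists>z\<in>B j m. rho m (pD k) z < \<eta> m"
          using W[of m] unfolding WS_def by auto
        show "r j1 \<le> r (fst w) + real (L m) * rho m x (pD (snd w))"
        proof (cases "r j1 \<le> r j")
          case True
          have "0 \<le> real (L m) * rho m x (pD k)" by (simp add: rho_nonneg)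
          then show ?thesis using True wjk(1) by simp
        next
          case False
          obtain z where z: "z \<in> B j m" "rho m (pD k) z < \<eta> m" using wjk(4) by blast
          have "sep m \<le> rho m x z" using AB_sep[OF mA z(1)] False by simp
          moreover have "rho m x z \<le> rho m x (pD k) + rho m (pD k) z" by (rule rho_tri)
          ultimately have rl: "sep m / 2 \<le> rho m x (pD k)" using z(2) \<eta>_le by linarith
          have "real (L m) * (sep m / 2) = real (L m) / (2 * (real m + 1))" unfolding sep_def by simp
          also have "\<dots> \<ge> 4 * (real m + 1) * C m / (2 * (real m + 1))"
            using L_ge[of m] by (intro divide_right_mono) auto
          finally have "real (L m) * (sep m / 2) \<ge> 4 * (real m + 1) * C m / (2 * (real m + 1))" .
          moreover have "4 * (real m + 1) * C m / (2 * (real m + 1)) = 2 * C m"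
            by (simp add: field_simps)
          ultimately have "real (L m) * (sep m / 2) \<ge> 2 * C m" by linarith
          moreover have "real (L m) * (sep m / 2) \<le> real (L m) * rho m x (pD k)"
            using rl by (intro mult_left_mono) auto
          moreover have "\<bar>r j\<bar> \<le> C m" "\<bar>r j1\<bar> \<le> C m" using C_ge wjk(2) j1m by auto
          ultimately show ?thesis using wjk(1) by simp
        qed
      qed
      have up: "\<sigma> m x < r j2 + \<epsilon>/2"
      proof -
        obtain k where k: "k \<in> K m" "rho m x (pD k) < \<eta> m" using K(2)[OF x] by blast
        have "(j2, k) \<in> set (W m)" unfolding W WS_def
          using j2m k mB rho_sym[of m "pD k" x] by (auto intro!: bexI[of _ x])
        then have "\<sigma> m x \<le> r j2 + real (L m) * rho m x (pD k)"
          unfolding \<sigma>_def sfun_def using smin_le[of "(j2,k)" "W m" "real m" "\<lambda>w. r (fst w) + real (L m) * rho m x (pD (snd w))"] by simp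
        also have "\<dots> \<le> r j2 + real (L m) * \<eta> m"
          using k(2) by (simp add: mult_left_mono)
        also have "real (L m) * \<eta> m \<le> 1 / (2 * (real m + 1))"
        proof -
          have "real (L m) * \<eta> m = (1/(2*(real m+1))) * (real (L m) / (real (L m) + 1))"
            unfolding \<eta>_def by (simp add: field_simps)
          also have "\<dots> \<le> (1/(2*(real m+1))) * 1" by (intro mult_left_mono) auto
          finally show ?thesis by simp
        qed
        also have "1 / (2 * (real m + 1)) < \<epsilon> / 2"
        proof -
          have "1 < \<epsilon> * real m" using mdm \<epsilon> by (simp add: field_simps)
          then have "1 < \<epsilon> * (real m + 1)" using \<epsilon> by (simp add: algebra_simps)
          then show ?thesis using \<epsilon> by (simp add: field_simps)
        qed
        finally show ?thesis by simp
      qed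
      show "norm (\<sigma> m x - f x) < \<epsilon>" using low up j1 j2 by simp
    qed
  qed
  show ?thesis using \<sigma>S conv by blast
qed

end

lemma seq_closure_mono: "A \<subseteq> B \<Longrightarrow> seq_closure Z A \<subseteq> seq_closure Z B"
  unfolding seq_closure_def by blast

lemma pw_limit:
  assumes "\<And>n. \<sigma> n \<in> extensional (topspace X)"
  shows "limitin (pointwise_top X) \<sigma> f sequentially \<longleftrightarrow>
     f \<in> extensional (topspace X) \<and> (\<forall>x\<in>topspace X. (\<lambda>n. \<sigma> n x) \<longlonglongrightarrow> f x)"
  unfolding pointwise_top_def limitin_componentwise using assms by (simp add: PiE_iff)

lemma fs_of_limit:
  assumes g: "\<And>n. continuous_map X euclideanreal (g n)"
    and lim: "\<And>x. x \<in> topspace X \<Longrightarrow> (\<lambda>n. g n x) \<longlonglongrightarrow> h x"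
  shows "fsigma_in X {x\<in>topspace X. q < h x}"
proof -
  define P where "P ab = {x\<in>topspace X. \<forall>n\<ge>snd ab. q + 1/(real (fst ab) + 1) \<le> g n x}" for ab :: "nat \<times> nat"
  have eq: "{x\<in>topspace X. q < h x} = \<Union>(range P)"
  proof
    show "{x\<in>topspace X. q < h x} \<subseteq> \<Union>(range P)"
    proof
      fix x assume x: "x \<in> {x\<in>topspace X. q < h x}"
      obtain a :: nat where a: "1 / (h x - q) < real a" using reals_Archimedean2 by blast
      have "1 / (real a + 1) < h x - q"
      proof -
        have "1 / (h x - q) < real a + 1" using a by linarith
        then show ?thesis using x by (simp add: field_simps)
      qed
      then have "q + 1/(real a + 1) < h x" by linarith
      then have "eventually (\<lambda>n. q + 1/(real a + 1) < g n x) sequentially"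
        using lim x by (intro order_tendstoD(1)) auto
      then obtain b where b: "\<forall>n\<ge>b. q + 1/(real a + 1) < g n x" unfolding eventually_sequentially by blast
      then have "x \<in> P (a,b)" using x unfolding P_def by (auto intro: less_imp_le)
      then show "x \<in> \<Union>(range P)" by blast
    qed
    show "\<Union>(range P) \<subseteq> {x\<in>topspace X. q < h x}"
    proof
      fix x assume "x \<in> \<Union>(range P)"
      then obtain a b where x: "x \<in> topspace X" "\<forall>n\<ge>b. q + 1/(real a + 1) \<le> g n x" unfolding P_def by auto
      have "q + 1/(real a + 1) \<le> h x"
        using lim[OF x(1)] by (rule LIMSEQ_le_const) (use x(2) in blast)
      moreover have "1/(real a + 1) > 0" by simp
      ultimately have "q < h x" by linarith
      then show "x \<in> {x\<in>topspace X. q < h x}" using x(1) by simp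
    qed
  qed
  have "closedin X (P ab)" for ab
  proof -
    let ?c = "q + 1/(real (fst ab) + 1)"
    have "P ab = \<Inter>{{x\<in>topspace X. g n x \<in> {?c..}} | n. n \<ge> snd ab}"
      unfolding P_def by auto
    moreover have "closedin X (\<Inter>{{x\<in>topspace X. g n x \<in> {?c..}} | n. n \<ge> snd ab})"
    proof (rule closedin_Inter)
      have cl: "closedin X {x\<in>topspace X. c \<le> g n x}" for n c
        using closedin_continuous_map_preimage[OF g[of n], of "{c..}"] by simp
      show "\<And>S. S \<in> {{x\<in>topspace X. g n x \<in> {?c..}} | n. n \<ge> snd ab} \<Longrightarrow> closedin X S"
        using cl by auto
    qed auto
    ultimately show ?thesis by simp
  qed
  then show ?thesis unfolding eq by (intro fsigma_in_Union) (auto intro: closed_imp_fsigma_in)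
qed


lemma seq_sub_closure:
  assumes "S \<subseteq> T" "seq_closure Z S = T"
  shows "seq_closure (subtopology Z T) S = T" "topspace (subtopology Z T) = T"
proof -
  have Tt: "T \<subseteq> topspace Z" using assms(2) unfolding seq_closure_def using limitin_topspace by fastforce
  then show "topspace (subtopology Z T) = T" by auto
  show "seq_closure (subtopology Z T) S = T"
  proof
    show "seq_closure (subtopology Z T) S \<subseteq> T"
      unfolding seq_closure_def limitin_subtopology by blast
    show "T \<subseteq> seq_closure (subtopology Z T) S"
    proof
      fix z assume z: "z \<in> T"
      then obtain \<sigma> where "range \<sigma> \<subseteq> S" "limitin Z \<sigma> z sequentially"
        using assms(2) unfolding seq_closure_def by blast
      then show "z \<in> seq_closure (subtopology Z T) S"
      proof -
        have "\<forall>a. \<sigma> a \<in> T" using \<open>range \<sigma> \<subseteq> S\<close> assms(1) by blast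
        then have "eventually (\<lambda>a. \<sigma> a \<in> T) sequentially" by (simp add: always_eventually)
        then show ?thesis
          unfolding seq_closure_def limitin_subtopology using z \<open>range \<sigma> \<subseteq> S\<close> \<open>limitin Z \<sigma> z sequentially\<close> by blast
      qed
    qed
  qed
qed

theorem corollary3p5:
  fixes X :: "'a topology"
  assumes "separable_space X" and "metrizable_space X"
  shows "sequentially_separable (USC_p X) \<and>
         sequentially_separable (B1_p X) \<and>
         (\<exists>S. countable S \<and> S \<subseteq> Cfun X \<and> seq_closure (pointwise_top X) S = B1 X)"
proof -
  obtain M d where Md: "Metric_space M d" and X: "X = Metric_space.mtopology M d"
    using assms(2) unfolding metrizable_space_def by blast
  interpret Metric_space M d by (rule Md)
  have tX: "topspace X = M" using X by simp
  obtain D where D: "countable D" "D \<subseteq> topspace X" "X closure_of D = topspace X"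
    using assms(1) unfolding separable_space_def by blast
  define pD where "pD = from_nat_into D"
  define r where "r = from_nat_into (\<rat> :: real set)"
  have "(\<rat>::real set) \<noteq> {}" using Rats_0 by blast
  then have rng_r: "range r = \<rat>" unfolding r_def by (simp add: countable_rat)
  have DM: "D \<noteq> {}" if "M \<noteq> {}"
    using D(3) tX that by (metis closure_of_empty)
  have ax: "SepMet_axioms M d pD r"
    unfolding SepMet_axioms_def
  proof (intro conjI allI impI)
    fix k assume "M \<noteq> {}"
    then have "pD k \<in> D" unfolding pD_def by (intro from_nat_into DM)
    then show "pD k \<in> M" using D(2) tX by blast
  next
    fix x and \<epsilon> :: real assume x: "x \<in> M" and \<epsilon>: "\<epsilon> > 0"
    have "mtopology closure_of D = M" using D(3) X by simp
    then have "x \<in> mtopology closure_of D" using x by simp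
    then obtain y where y: "y \<in> D" "y \<in> mball x \<epsilon>" using \<epsilon> unfolding metric_closure_of by blast
    then have "y \<in> range pD" using D(1) unfolding pD_def by (metis empty_iff range_from_nat_into)
    then obtain k where "y = pD k" by blast
    then show "\<exists>k. d x (pD k) < \<epsilon>" using y(2) by auto
  next
    fix a b :: real assume "a < b"
    then obtain q where "q \<in> \<rat>" "a < q" "q < b" using Rats_dense_in_real by blast
    then show "\<exists>j. a < r j \<and> r j < b" using rng_r by (metis rangeE)
  qed
  interpret SM: SepMet M d pD r by (intro SepMet.intro Md ax)
  define S where "S = (\<lambda>(N,L,c,W). restrict (SM.sfun N L c W) M) ` (UNIV :: (nat \<times> nat \<times> nat \<times> (nat\<times>nat) list) set)"
  have cS: "countable S" unfolding S_def by simp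
  have SC: "S \<subseteq> Cfun X"
  proof
    fix s assume "s \<in> S"
    then obtain N L c W where s: "s = restrict (SM.sfun N L c W) M" unfolding S_def by auto
    have "continuous_map X euclideanreal s"
      using continuous_map_eq[OF SM.sfun_cont[of N L c W], of s] s X by simp
    then show "s \<in> Cfun X" unfolding Cfun_def using s tX by auto
  qed
  have key: "f \<in> seq_closure (pointwise_top X) S"
    if fe: "f \<in> extensional M" and fU: "\<And>q. fsigma_in X {x\<in>M. q < f x}"
      and fL: "\<And>q. fsigma_in X {x\<in>M. f x < q}" for f
  proof -
    obtain \<sigma> where \<sigma>: "\<forall>m. \<exists>N L c W. \<sigma> m = SM.sfun N L c W" "\<forall>x\<in>M. (\<lambda>m. \<sigma> m x) \<longlonglongrightarrow> f x"
      using SM.core[of f] fU fL X by auto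
    define \<tau> where "\<tau> m = restrict (\<sigma> m) M" for m
    have "\<tau> m \<in> S" for m
    proof -
      obtain N L c W where "\<sigma> m = SM.sfun N L c W" using \<sigma>(1) by blast
      then show ?thesis unfolding \<tau>_def S_def by (auto intro!: image_eqI[of _ _ "(N,L,c,W)"])
    qed
    moreover have "limitin (pointwise_top X) \<tau> f sequentially"
      using fe \<sigma>(2) tX by (subst pw_limit) (auto simp: \<tau>_def)
    ultimately show ?thesis unfolding seq_closure_def by blast
  qed
  have B1_F: "f \<in> seq_closure (pointwise_top X) S" if f: "f \<in> B1 X" for f
  proof -
    obtain \<tau> where \<tau>: "range \<tau> \<subseteq> Cfun X" "limitin (pointwise_top X) \<tau> f sequentially"
      using f unfolding B1_def seq_closure_def by blast
    have ext: "\<And>n. \<tau> n \<in> extensional (topspace X)" and cont: "\<And>n. continuous_map X euclideanreal (\<tau> n)"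
      using \<tau>(1) unfolding Cfun_def by (auto simp: PiE_def)
    have fe: "f \<in> extensional M" and lim: "\<And>x. x \<in> topspace X \<Longrightarrow> (\<lambda>n. \<tau> n x) \<longlonglongrightarrow> f x"
      using \<tau>(2) unfolding pw_limit[OF ext] tX by auto
    have fU: "fsigma_in X {x\<in>M. q < f x}" for q
      using fs_of_limit[OF cont lim, of q] tX by simp
    have fL: "fsigma_in X {x\<in>M. f x < q}" for q
    proof -
      have "fsigma_in X {x\<in>topspace X. - q < - f x}"
        by (rule fs_of_limit[of X "\<lambda>n x. - \<tau> n x"]) (use cont lim in \<open>auto intro: continuous_map_minus tendsto_minus\<close>)
      then show ?thesis using tX by simp
    qed
    show ?thesis by (rule key[OF fe fU fL])
  qed
  have USC_F: "f \<in> seq_closure (pointwise_top X) S" if f: "f \<in> USC X" for f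
  proof -
    have fe: "f \<in> extensional M" and op: "\<And>q. openin X {x\<in>M. f x < q}"
      using f tX unfolding USC_def by (auto simp: PiE_def)
    have fL: "fsigma_in X {x\<in>M. f x < q}" for q
      by (rule open_imp_fsigma_in[OF assms(2) op])
    have fU: "fsigma_in X {x\<in>M. q < f x}" for q
    proof -
      define P where "P a = M - {x\<in>M. f x < q + 1/(real a + 1)}" for a :: nat
      have eq: "{x\<in>M. q < f x} = \<Union>(range P)"
      proof
        show "{x\<in>M. q < f x} \<subseteq> \<Union>(range P)"
        proof
          fix x assume x: "x \<in> {x\<in>M. q < f x}"
          obtain a :: nat where a: "1 / (f x - q) < real a" using reals_Archimedean2 by blast
          have "1 / (f x - q) < real a + 1" using a by linarith
          then have "1 / (real a + 1) < f x - q" using x by (simp add: field_simps)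
          then have "x \<in> P a" using x unfolding P_def by auto
          then show "x \<in> \<Union>(range P)" by blast
        qed
        show "\<Union>(range P) \<subseteq> {x\<in>M. q < f x}"
        proof
          fix x assume "x \<in> \<Union>(range P)"
          then obtain a where x: "x \<in> M" "\<not> f x < q + 1/(real a + 1)" unfolding P_def by auto
          have "1/(real a + 1) > 0" by simp
          then have "q < f x" using x(2) by linarith
          then show "x \<in> {x\<in>M. q < f x}" using x(1) by simp
        qed
      qed
      have "closedin X (P a)" for a
        unfolding P_def using closedin_diff[OF closedin_topspace op] tX by simp
      then show ?thesis unfolding eq by (intro fsigma_in_Union) (auto intro: closed_imp_fsigma_in)
    qed
    show ?thesis by (rule key[OF fe fU fL])
  qed
  have CB1: "Cfun X \<subseteq> B1 X"
  proof
    fix f assume f: "f \<in> Cfun X"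
    have "limitin (pointwise_top X) (\<lambda>n. f) f sequentially"
      using f unfolding Cfun_def pointwise_top_def by simp
    moreover have "range (\<lambda>n::nat. f) \<subseteq> Cfun X" using f by auto
    ultimately show "f \<in> B1 X" unfolding B1_def seq_closure_def by blast
  qed
  have CU: "Cfun X \<subseteq> USC X"
  proof
    fix f assume f: "f \<in> Cfun X"
    have "openin X {x \<in> topspace X. f x < q}" for q
      using openin_continuous_map_preimage[of X euclideanreal f "{..<q}"] f unfolding Cfun_def by simp
    then show "f \<in> USC X" using f unfolding Cfun_def USC_def by auto
  qed
  have p3: "seq_closure (pointwise_top X) S = B1 X"
  proof
    show "seq_closure (pointwise_top X) S \<subseteq> B1 X"
      unfolding B1_def by (rule seq_closure_mono[OF SC])
    show "B1 X \<subseteq> seq_closure (pointwise_top X) S" using B1_F by blast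
  qed
  have pU: "seq_closure (pointwise_top X) S \<inter> USC X = USC X" using USC_F by blast
  have p1: "seq_closure (pointwise_top X) S \<supseteq> USC X" using USC_F by blast
  have SB1: "S \<subseteq> B1 X" using SC CB1 by blast
  have SU: "S \<subseteq> USC X" using SC CU by blast
  have s2: "sequentially_separable (B1_p X)"
    unfolding sequentially_separable_def B1_p_def
    using seq_sub_closure[OF SB1 p3] cS SB1 by metis
  have USCt: "USC X \<subseteq> topspace (pointwise_top X)"
    unfolding USC_def pointwise_top_def by auto
  have s1: "sequentially_separable (USC_p X)"
  proof -
    have eq: "seq_closure (USC_p X) S = USC X"
    proof
      show "seq_closure (USC_p X) S \<subseteq> USC X"
        unfolding seq_closure_def USC_p_def limitin_subtopology by blast
      show "USC X \<subseteq> seq_closure (USC_p X) S"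
      proof
        fix z assume z: "z \<in> USC X"
        then obtain \<sigma> where "range \<sigma> \<subseteq> S" "limitin (pointwise_top X) \<sigma> z sequentially"
          using USC_F unfolding seq_closure_def by blast
        then show "z \<in> seq_closure (USC_p X) S"
        proof -
          have "\<forall>a. \<sigma> a \<in> USC X" using \<open>range \<sigma> \<subseteq> S\<close> SU by blast
          then have "eventually (\<lambda>a. \<sigma> a \<in> USC X) sequentially" by (simp add: always_eventually)
          then show ?thesis
            unfolding seq_closure_def USC_p_def limitin_subtopology using z \<open>range \<sigma> \<subseteq> S\<close> \<open>limitin (pointwise_top X) \<sigma> z sequentially\<close> by blast
        qed
      qed
    qed
    have "topspace (USC_p X) = USC X" unfolding USC_p_def using USCt by auto
    then show ?thesis unfolding sequentially_separable_def using eq cS SU by metis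
  qed
  show ?thesis using s1 s2 cS SC p3 by blast
qed

end
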